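(* Let $\mathbb{L}$ be the projective Fraïssé limit of $\mathcal{F}^{(n)}$, let $i\in[n]$ and let $b$ be a clopen subset of $L$ with $p_i^{\mathbb{L}}\in b$. Then there exists a clopen set $c$ with $p_i^{\mathbb{L}}\in c\subseteq b$ such that $c$ is a union of connected components of $\mathbb{L}$.
   Context: Fix $m\in\mathbb{N}$, $n\ge0$; $\sigma^{(n)}=\{s_1,\dots,s_m,p_1,\dots,p_n\}$ with $s_i$ binary relation symbols and $p_j$ constants. A topological structure is a zero-dimensional compact second countable space with closed sets for the $s_i$ and points for the $p_j$; finite ones are discrete. An epimorphism is a continuous surjection $\phi$ with $\phi(s_i^{\mathbb{A}})=s_i^{\mathbb{B}}$ and $\phi(p_j^{\mathbb{A}})=p_j^{\mathbb{B}}$. A binary relation $s$ on $A$ is surjective if each $a$ has $b,c$ with $(a,b),(c,a)\in s$; $a$ is outgoing for $s$ if $|\{b:(b,a)\in s\}|=1$ and $|\{b:(a,b)\in s\}|\ge2$. $\mathcal{F}$: finite $\{s_1,\dots,s_m\}$-structures with all $s_i$ surjective such that (i) every point is outgoing for exactly one of $s_1,s_1^{-1},\dots,s_m,s_m^{-1}$, (ii) if $(a,b)\in s_i$ then $a$ is $s_i$-outgoing or $b$ is $s_i^{-1}$-outgoing. $\mathbb{A}^{(n)}$: universe $A\sqcup[n]$, $s_i^{\mathbb{A}^{(n)}}=s_i^{\mathbb{A}}\cup\{(j,j):j\in[n]\}$, $p_j^{\mathbb{A}^{(n)}}=j$; $\mathcal{F}^{(n)}=\{\mathbb{A}^{(n)}:\mathbb{A}\in\mathcal{F}\}$.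 The projective Fraïssé limit $\mathbb{L}$ of $\mathcal{F}^{(n)}$ (exists, unique up to isomorphism) satisfies: (L1) every member of $\mathcal{F}^{(n)}$ is an epimorphic image of $\mathbb{L}$; (L2) every continuous map from $L$ to a finite discrete set factors through an epimorphism of $\mathbb{L}$ onto a member of $\mathcal{F}^{(n)}$; (L3) any two epimorphisms $\phi_1,\phi_2\colon\mathbb{L}\to\mathbb{A}\in\mathcal{F}^{(n)}$ satisfy $\phi_1=\phi_2\alpha$ for some automorphism $\alpha$ of $\mathbb{L}$. Connected components of a $\sigma$- or $\sigma^{(n)}$-structure are the connected components of the simple graph on its universe with an edge $\{a,b\}$ whenever $a\ne b$ and $(a,b)\in s_i$ for some $i$. *)

theory Defs
  imports "HOL-Analysis.Analysis"
begin

text \<open>A sigma^(n)-structure: a topology, binary relations s_1..s_m (indices 0..m-1,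
  so s_{i+1} is rel S i) and constants p_1..p_n (pt S j for j in {1..n}).\<close>
record 'a tstruct =
  top :: "'a topology"
  rel :: "nat \<Rightarrow> ('a \<times> 'a) set"
  pt  :: "nat \<Rightarrow> 'a"

definition clopen_in :: "'a topology \<Rightarrow> 'a set \<Rightarrow> bool" where
  "clopen_in T U \<longleftrightarrow> openin T U \<and> closedin T U"

definition zero_dimensional_space :: "'a topology \<Rightarrow> bool" where
  "zero_dimensional_space T \<longleftrightarrow>
     (\<forall>U x. openin T U \<and> x \<in> U \<longrightarrow> (\<exists>V. clopen_in T V \<and> x \<in> V \<and> V \<subseteq> U))"

definition topological_structure :: "nat \<Rightarrow> nat \<Rightarrow> 'a tstruct \<Rightarrow> bool" where
  "topological_structure m n S \<longleftrightarrow>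
     zero_dimensional_space (top S) \<and> Hausdorff_space (top S) \<and>
     compact_space (top S) \<and> second_countable (top S) \<and>
     (\<forall>i<m. rel S i \<subseteq> topspace (top S) \<times> topspace (top S) \<and>
            closedin (prod_topology (top S) (top S)) (rel S i)) \<and>
     (\<forall>j\<in>{1..n}. pt S j \<in> topspace (top S))"

definition epimorphism :: "nat \<Rightarrow> nat \<Rightarrow> 'a tstruct \<Rightarrow> 'b tstruct \<Rightarrow> ('a \<Rightarrow> 'b) \<Rightarrow> bool" where
  "epimorphism m n A B \<phi> \<longleftrightarrow>
     continuous_map (top A) (top B) \<phi> \<and> \<phi> ` topspace (top A) = topspace (top B) \<and>
     (\<forall>i<m. (\<lambda>(x, y). (\<phi> x, \<phi> y)) ` rel A i = rel B i) \<and>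
     (\<forall>j\<in>{1..n}. \<phi> (pt A j) = pt B j)"

definition automorphism :: "nat \<Rightarrow> nat \<Rightarrow> 'a tstruct \<Rightarrow> ('a \<Rightarrow> 'a) \<Rightarrow> bool" where
  "automorphism m n L \<alpha> \<longleftrightarrow>
     (\<exists>\<beta>. epimorphism m n L L \<alpha> \<and> epimorphism m n L L \<beta> \<and>
          (\<forall>x\<in>topspace (top L). \<beta> (\<alpha> x) = x \<and> \<alpha> (\<beta> x) = x))"

definition surjective_rel :: "'b set \<Rightarrow> ('b \<times> 'b) set \<Rightarrow> bool" where
  "surjective_rel A s \<longleftrightarrow> (\<forall>a\<in>A. \<exists>b c. (a, b) \<in> s \<and> (c, a) \<in> s)"

definition outgoing :: "('b \<times> 'b) set \<Rightarrow> 'b \<Rightarrow> bool" where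
  "outgoing s a \<longleftrightarrow> card {b. (b, a) \<in> s} = 1 \<and> 2 \<le> card {b. (a, b) \<in> s}"

text \<open>The 2m relations s_1, s_1^-1, ..., s_m, s_m^-1 are indexed by pairs (i, e),
  e = True for s_i and e = False for s_i^-1.\<close>
definition in_F :: "nat \<Rightarrow> 'b set \<Rightarrow> (nat \<Rightarrow> ('b \<times> 'b) set) \<Rightarrow> bool" where
  "in_F m A R \<longleftrightarrow> finite A \<and>
     (\<forall>i<m. R i \<subseteq> A \<times> A \<and> surjective_rel A (R i)) \<and>
     (\<forall>a\<in>A. card {(i, e). i < m \<and> outgoing (if e then R i else (R i)\<inverse>) a} = 1) \<and>
     (\<forall>i<m. \<forall>(a, b)\<in>R i. outgoing (R i) a \<or> outgoing ((R i)\<inverse>) b)"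

definition ext_n :: "nat \<Rightarrow> 'b set \<Rightarrow> (nat \<Rightarrow> ('b \<times> 'b) set) \<Rightarrow> ('b + nat) tstruct" where
  "ext_n n A R =
     \<lparr> top = discrete_topology (Inl ` A \<union> Inr ` {1..n}),
       rel = (\<lambda>i. (\<lambda>(x, y). (Inl x, Inl y)) ` R i \<union> {(Inr j, Inr j) | j. j \<in> {1..n}}),
       pt = (\<lambda>j. Inr j) \<rparr>"

text \<open>Members of F are taken
  with universe in nat (every finite structure is isomorphic to one of these); finite discrete
  target sets in (L2) are likewise taken as finite subsets of nat.\<close>
definition proj_fraisse_limit :: "nat \<Rightarrow> nat \<Rightarrow> 'a tstruct \<Rightarrow> bool" where
  "proj_fraisse_limit m n L \<longleftrightarrow>
     topological_structure m n L \<and>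
     (\<forall>(A::nat set) R. in_F m A R \<longrightarrow> (\<exists>\<phi>. epimorphism m n L (ext_n n A R) \<phi>)) \<and>
     (\<forall>(Y::nat set) f. finite Y \<and> continuous_map (top L) (discrete_topology Y) f \<longrightarrow>
        (\<exists>(A::nat set) R \<phi> g. in_F m A R \<and> epimorphism m n L (ext_n n A R) \<phi> \<and>
            (\<forall>x\<in>topspace (top L). f x = g (\<phi> x)))) \<and>
     (\<forall>(A::nat set) R \<phi>1 \<phi>2. in_F m A R \<and> epimorphism m n L (ext_n n A R) \<phi>1 \<and>
          epimorphism m n L (ext_n n A R) \<phi>2 \<longrightarrow>
        (\<exists>\<alpha>. automorphism m n L \<alpha> \<and> (\<forall>x\<in>topspace (top L). \<phi>1 x = \<phi>2 (\<alpha> x))))"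

definition graph_edges :: "nat \<Rightarrow> 'a tstruct \<Rightarrow> ('a \<times> 'a) set" where
  "graph_edges m S = {(a, b). a \<in> topspace (top S) \<and> b \<in> topspace (top S) \<and> a \<noteq> b \<and>
                        (\<exists>i<m. (a, b) \<in> rel S i \<or> (b, a) \<in> rel S i)}"

definition connected_component_of :: "nat \<Rightarrow> 'a tstruct \<Rightarrow> 'a \<Rightarrow> 'a set" where
  "connected_component_of m S a = {b. (a, b) \<in> (graph_edges m S)\<^sup>*}"

definition connected_components :: "nat \<Rightarrow> 'a tstruct \<Rightarrow> 'a set set" where
  "connected_components m S = connected_component_of m S ` topspace (top S)"

definition union_of_components :: "nat \<Rightarrow> 'a tstruct \<Rightarrow> 'a set \<Rightarrow> bool" where
  "union_of_components m S c \<longleftrightarrow> (\<exists>K \<subseteq> connected_components m S. c = \<Union>K)"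

end

theory Submission
  imports Defs
begin

lemma indicator_cont:
  assumes "clopen_in X b"
  shows "continuous_map X (discrete_topology {0::nat,1}) (\<lambda>x. if x \<in> b then 1 else 0)"
proof -
  have ob: "openin X b" and cb: "closedin X b" using assms by (auto simp: clopen_in_def)
  have oc: "openin X (topspace X - b)" using cb by (simp add: closedin_def)
  have bs: "b \<subseteq> topspace X" using ob openin_subset by blast
  have "openin X {x \<in> topspace X. (if x \<in> b then 1 else 0) \<in> U}" for U :: "nat set"
  proof -
    consider "0 \<in> U" "1 \<in> U" | "0 \<in> U" "1 \<notin> U" | "0 \<notin> U" "1 \<in> U" | "0 \<notin> U" "1 \<notin> U" by blast
    then show ?thesis
    proof cases
      case 1 then have "{x \<in> topspace X. (if x \<in> b then 1 else 0) \<in> U} = topspace X" by auto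
      then show ?thesis by (metis openin_topspace)
    next
      case 2 then have "{x \<in> topspace X. (if x \<in> b then 1 else 0) \<in> U} = topspace X - b" by auto
      then show ?thesis using oc by metis
    next
      case 3 then have "{x \<in> topspace X. (if x \<in> b then 1 else 0) \<in> U} = b" using bs by auto
      then show ?thesis using ob by metis
    next
      case 4 then have "{x \<in> topspace X. (if x \<in> b then 1 else 0) \<in> U} = {}" by auto
      then show ?thesis by (metis openin_empty)
    qed
  qed
  then show ?thesis unfolding continuous_map_def by auto
qed

theorem lemma3p6:
  fixes m n :: nat and L :: "'a tstruct" and i :: nat and b :: "'a set"
  assumes "proj_fraisse_limit m n L"
    and "i \<in> {1..n}"
    and "clopen_in (top L) b"
    and "pt L i \<in> b"
  shows "\<exists>c. clopen_in (top L) c \<and> pt L i \<in> c \<and> c \<subseteq> b \<and> union_of_components m L c"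
proof -
  define f where "f = (\<lambda>x. if x \<in> b then 1 else (0::nat))"
  have fc: "continuous_map (top L) (discrete_topology {0::nat,1}) f"
    unfolding f_def using indicator_cont[OF assms(3)] .
  have ts: "topological_structure m n L" using assms(1) by (simp add: proj_fraisse_limit_def)
  have ptL: "pt L i \<in> topspace (top L)" using ts assms(2) by (simp add: topological_structure_def)
  obtain A R \<phi> g where F: "in_F m (A::nat set) R" and ep: "epimorphism m n L (ext_n n A R) \<phi>"
      and fg: "\<forall>x\<in>topspace (top L). f x = g (\<phi> x)"
    using assms(1) fc unfolding proj_fraisse_limit_def by (metis finite.emptyI finite.insertI)
  have phc: "continuous_map (top L) (discrete_topology (Inl ` A \<union> Inr ` {1..n})) \<phi>"
    using ep by (simp add: epimorphism_def ext_n_def)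
  have phrel: "\<And>k x y. k < m \<Longrightarrow> (x, y) \<in> rel L k \<Longrightarrow>
      (\<phi> x, \<phi> y) \<in> (\<lambda>(x, y). (Inl x, Inl y)) ` R k \<union> {(Inr j, Inr j) | j. j \<in> {1..n}}"
  proof -
    fix k x y assume k: "k < m" and xy: "(x, y) \<in> rel L k"
    have "(\<lambda>(x, y). (\<phi> x, \<phi> y)) ` rel L k = rel (ext_n n A R) k" using ep k by (simp add: epimorphism_def)
    then have "(\<phi> x, \<phi> y) \<in> rel (ext_n n A R) k" using xy by force
    then show "(\<phi> x, \<phi> y) \<in> (\<lambda>(x, y). (Inl x, Inl y)) ` R k \<union> {(Inr j, Inr j) | j. j \<in> {1..n}}"
      by (simp add: ext_n_def)
  qed
  have php: "\<phi> (pt L i) = Inr i" using ep assms(2) by (simp add: epimorphism_def ext_n_def)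
  define c where "c = {x \<in> topspace (top L). \<phi> x \<in> {Inr i}}"
  have oc: "openin (top L) c" unfolding c_def
  proof -
    have "{Inr i} \<subseteq> Inl ` A \<union> Inr ` {1..n}" using assms(2) by auto
    moreover have "\<forall>U\<subseteq>Inl ` A \<union> Inr ` {1..n}. openin (top L) {x \<in> topspace (top L). \<phi> x \<in> U}"
      using phc unfolding continuous_map_def openin_discrete_topology by (elim conjE) assumption
    ultimately show "openin (top L) {x \<in> topspace (top L). \<phi> x \<in> {Inr i}}"
      by (simp only: subset_eq Ball_def)
  qed
  have cc: "closedin (top L) c" unfolding c_def
    apply (rule closedin_continuous_map_preimage[OF phc]) using assms(2) by auto
  have cin: "pt L i \<in> c" using ptL php by (simp add: c_def)
  have csub: "c \<subseteq> b"
  proof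
    fix x assume x: "x \<in> c"
    then have "f x = g (Inr i)" using fg by (simp add: c_def)
    also have "\<dots> = f (pt L i)" using fg ptL php by simp
    also have "\<dots> = 1" using assms(4) by (simp add: f_def)
    finally show "x \<in> b" by (simp add: f_def split: if_splits)
  qed
  have step: "\<And>x y. x \<in> c \<Longrightarrow> (x, y) \<in> graph_edges m L \<Longrightarrow> y \<in> c"
  proof -
    fix x y assume x: "x \<in> c" and e: "(x, y) \<in> graph_edges m L"
    then obtain k where k: "k < m" and r: "(x, y) \<in> rel L k \<or> (y, x) \<in> rel L k"
      and yt: "y \<in> topspace (top L)" by (auto simp: graph_edges_def)
    have px: "\<phi> x = Inr i" using x by (simp add: c_def)
    from r have "\<phi> y = Inr i"
    proof
      assume "(x, y) \<in> rel L k"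
      from phrel[OF k this] px show ?thesis by auto
    next
      assume "(y, x) \<in> rel L k"
      from phrel[OF k this] px show ?thesis by auto
    qed
    then show "y \<in> c" using yt by (simp add: c_def)
  qed
  have comp: "connected_component_of m L x \<subseteq> c" if "x \<in> c" for x
  proof
    fix y assume "y \<in> connected_component_of m L x"
    then have "(x, y) \<in> (graph_edges m L)\<^sup>*" by (simp add: connected_component_of_def)
    then show "y \<in> c"
      by (induction rule: rtrancl_induct) (use that step in auto)
  qed
  have "union_of_components m L c"
    unfolding union_of_components_def
  proof (intro exI conjI)
    show "connected_component_of m L ` c \<subseteq> connected_components m L"
      unfolding connected_components_def c_def by auto
    show "c = \<Union> (connected_component_of m L ` c)"
      using comp by (auto simp: connected_component_of_def)
  qed
  then show ?thesis using oc cc cin csub by (auto simp: clopen_in_def)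
qed

end
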